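(* The magmatic $\mathbb K$-algebra $\mathrm{Mag}$ has a $\Bbbk$-basis consisting of the trivial monomials $1_n$ ($n\in\mathbb N$) and the monomials $\partial^m_{i_m}\cdots\partial^n_{i_n}$ with $m\ge n\ge0$, $i_m\ge\cdots\ge i_n$, and $0\le i_j\le j$ for all $j=n,\dots,m$.
   Context: Let $\Bbbk$ be a field and $\mathbb{K}=\bigoplus_{n\in\mathbb N}\Bbbk1_n$ with $1_n1_m=\delta_{nm}1_n$. A $\mathbb K$-algebra is the categorical algebra of a small $\Bbbk$-linear category with object set $\mathbb N$. $T(\partial)$ is the free $\mathbb K$-algebra on generators $\partial^n_j$ ($n\ge0$, $0\le j\le n$), where $\partial^n_j$ is a morphism $n\to n+1$ (so $1_{n+1}\partial^n_j=\partial^n_j1_n=\partial^n_j$, and products of generators with mismatched degrees are $0$; nonzero monomials have the form $\partial^m_{i_m}\partial^{m-1}_{i_{m-1}}\cdots\partial^n_{i_n}$). $\mathrm{Mag}=T(\partial)/I_{\mathrm{Mag}}$ with $I_{\mathrm{Mag}}$ the two-sided ideal generated by $\partial^{n+1}_i\partial^n_j-\partial^{n+1}_{j+1}\partial^n_i$ for $0\le i<j\le n$, $n\ge0$. *)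

theory Defs
  imports Main
begin

text \<open>Monomials of T(partial): a pair (n, w) with w = [i_n, i_(n+1), ..., i_m]
  (listed bottom-up) stands for the word partial^m_(i_m) ... partial^n_(i_n) : n -> m+1;
  (n, []) stands for the trivial monomial 1_n.\<close>

type_synonym mon = "nat \<times> nat list"

definition valid_mon :: "mon \<Rightarrow> bool" where
  "valid_mon x \<longleftrightarrow> (\<forall>j < length (snd x). snd x ! j \<le> fst x + j)"

text \<open>Elements of T(partial): finitely supported k-valued functions on valid monomials
  (i.e. finite k-linear combinations of monomials).\<close>

definition Tpd :: "(mon \<Rightarrow> 'k::field) set" where
  "Tpd = {f. finite {x. f x \<noteq> 0} \<and> (\<forall>x. f x \<noteq> 0 \<longrightarrow> valid_mon x)}"

text \<open>Multiplication in T(partial) (composition of paths; mismatched degrees give 0):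
  (f * g)(n, w) = sum over splittings w = u @ v of g(n,u) * f(n + length u, v).\<close>

definition tmult :: "(mon \<Rightarrow> 'k::field) \<Rightarrow> (mon \<Rightarrow> 'k) \<Rightarrow> (mon \<Rightarrow> 'k)" where
  "tmult f g = (\<lambda>(n, w). \<Sum>k\<le>length w. g (n, take k w) * f (n + k, drop k w))"

definition mono :: "mon \<Rightarrow> (mon \<Rightarrow> 'k::field)" where
  "mono x = (\<lambda>y. if y = x then 1 else 0)"

text \<open>Generator partial^(n+1)_i partial^n_j - partial^(n+1)_(j+1) partial^n_i.\<close>

definition mag_rel :: "nat \<Rightarrow> nat \<Rightarrow> nat \<Rightarrow> (mon \<Rightarrow> 'k::field)" where
  "mag_rel n i j = (\<lambda>y. mono (n, [j, i]) y - mono (n, [i, Suc j]) y)"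

definition ideal_gen :: "(mon \<Rightarrow> 'k::field) set \<Rightarrow> (mon \<Rightarrow> 'k) set" where
  "ideal_gen G = \<Inter>{J. J \<subseteq> Tpd \<and> G \<subseteq> J \<and> (\<lambda>_. 0) \<in> J
      \<and> (\<forall>f\<in>J. \<forall>g\<in>J. (\<lambda>x. f x + g x) \<in> J)
      \<and> (\<forall>c. \<forall>f\<in>J. (\<lambda>x. c * f x) \<in> J)
      \<and> (\<forall>f\<in>J. \<forall>g\<in>Tpd. tmult f g \<in> J \<and> tmult g f \<in> J)}"

definition I_Mag :: "(mon \<Rightarrow> 'k::field) set" where
  "I_Mag = ideal_gen {mag_rel n i j | n i j. i < j \<and> j \<le> n}"

text \<open>The claimed basis monomials: 1_n, and partial^m_(i_m)...partial^n_(i_n) with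
  i_m >= ... >= i_n, i.e. the bottom-up list is sorted (non-decreasing).\<close>

definition Bmon :: "mon set" where
  "Bmon = {x. valid_mon x \<and> sorted (snd x)}"

end

theory Submission
  imports Defs
begin

fun ins :: "nat \<Rightarrow> nat list \<Rightarrow> nat list" where
  "ins a [] = [a]"
| "ins a (b # s) = (if a \<le> b then a # b # s else b # ins (Suc a) s)"

fun nf :: "nat list \<Rightarrow> nat list" where
  "nf [] = []"
| "nf (a # w) = ins a (nf w)"

fun vl :: "nat \<Rightarrow> nat list \<Rightarrow> bool" where
  "vl n [] = True"
| "vl n (a # w) = (a \<le> n \<and> vl (Suc n) w)"

lemma valid_mon_vl: "valid_mon (n, w) = vl n w"
proof (induction w arbitrary: n)
  case Nil thus ?case by (simp add: valid_mon_def)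
next
  case (Cons a w)
  have "valid_mon (n, a#w) = (a \<le> n \<and> (\<forall>j<length w. w ! j \<le> Suc n + j))"
    unfolding valid_mon_def by (auto simp: less_Suc_eq_0_disj)
  then show ?case using Cons.IH[of "Suc n"] by (simp add: valid_mon_def)
qed

lemma length_ins[simp]: "length (ins a s) = Suc (length s)"
  by (induction a s rule: ins.induct) auto

lemma length_nf[simp]: "length (nf w) = length w"
  by (induction w) auto

lemma set_ins: "x \<in> set (ins a s) \<Longrightarrow> x \<in> set s \<or> a \<le> x"
  by (induction a s rule: ins.induct) (auto split: if_splits)

lemma sorted_ins: "sorted s \<Longrightarrow> sorted (ins a s)"
proof (induction a s rule: ins.induct)
  case (2 a b s)
  show ?case
  proof (cases "a \<le> b")
    case True with 2 show ?thesis by auto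
  next
    case False
    have "sorted (ins (Suc a) s)" using 2 False by simp
    moreover have "\<forall>x\<in>set (ins (Suc a) s). b \<le> x"
      using set_ins[of _ "Suc a" s] 2(2) False by fastforce
    ultimately show ?thesis using False by simp
  qed
qed simp

lemma sorted_nf: "sorted (nf w)"
  by (induction w) (auto simp: sorted_ins)

lemma ins_sorted_head: "(\<forall>x\<in>set s. a \<le> x) \<Longrightarrow> ins a s = a # s"
  by (cases s) auto

lemma nf_sorted: "sorted w \<Longrightarrow> nf w = w"
  by (induction w) (auto simp: ins_sorted_head)

lemma ins_comm: "b < a \<Longrightarrow> ins a (ins b s) = ins b (ins (Suc a) s)"
proof (induction s arbitrary: a b)
  case Nil thus ?case by simp
next
  case (Cons c t)
  show ?case
  proof (cases "b \<le> c")
    case True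
    have h: "ins b (ins (Suc a) (c # t)) = b # ins (Suc a) (c # t)"
      using True Cons.prems by auto
    show ?thesis using True Cons.prems h by simp
  next
    case False
    then show ?thesis using Cons.prems Cons.IH[of "Suc b" "Suc a"] by simp
  qed
qed

lemma nf_ins_app: "nf (a # s @ v) = nf (ins a s @ v)"
proof (induction s arbitrary: a)
  case Nil show ?case by simp
next
  case (Cons b t)
  show ?case
  proof (cases "a \<le> b")
    case True thus ?thesis by simp
  next
    case False
    have "nf (a # (b # t) @ v) = ins a (ins b (nf (t@v)))" by simp
    also have "\<dots> = ins b (ins (Suc a) (nf (t @ v)))" using False by (simp add: ins_comm)
    also have "\<dots> = ins b (nf (Suc a # t @ v))" by simp
    also have "\<dots> = ins b (nf (ins (Suc a) t @ v))" using Cons.IH by simp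
    also have "\<dots> = nf (ins a (b # t) @ v)" using False by simp
    finally show ?thesis .
  qed
qed

lemma nf_app_left: "nf (u @ v) = nf (nf u @ v)"
proof (induction u)
  case Nil show ?case by simp
next
  case (Cons a u)
  have "nf ((a # u) @ v) = ins a (nf (u @ v))" by simp
  also have "\<dots> = ins a (nf (nf u @ v))" using Cons.IH by simp
  also have "\<dots> = nf (a # nf u @ v)" by simp
  also have "\<dots> = nf (ins a (nf u) @ v)" by (rule nf_ins_app)
  finally show ?case by simp
qed

lemma nf_app_right: "nf (u @ v) = nf (u @ nf v)"
  by (induction u) (auto simp: nf_sorted sorted_nf)

lemma vl_append: "vl n (u @ v) = (vl n u \<and> vl (n + length u) v)"
  by (induction u arbitrary: n) auto

lemma vl_ins: "a \<le> n \<Longrightarrow> vl (Suc n) s \<Longrightarrow> vl n (ins a s)"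
  by (induction s arbitrary: a n) auto

lemma vl_nf: "vl n w \<Longrightarrow> vl n (nf w)"
  by (induction w arbitrary: n) (auto simp: vl_ins)

lemma vl_set: "vl n w \<Longrightarrow> set w \<subseteq> {..n + length w}"
  by (induction w arbitrary: n) fastforce+

definition V :: "nat \<Rightarrow> nat \<Rightarrow> nat list set" where
  "V n L = {w. length w = L \<and> vl n w}"

lemma finite_V: "finite (V n L)"
proof (rule finite_subset)
  show "V n L \<subseteq> {xs. set xs \<subseteq> {..n+L} \<and> length xs = L}"
    using vl_set by (auto simp: V_def)
  show "finite {xs. set xs \<subseteq> {..n+L} \<and> length xs = L}"
    by (rule finite_lists_length_eq) simp
qed


lemma tmult_apply: "tmult f g (n, w) = (\<Sum>k\<le>length w. g (n, take k w) * f (n + k, drop k w))"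
  by (simp add: tmult_def)

lemma tmult_mono_mono:
  "tmult (mono (m, v)) (mono (n, u)) = (if m = n + length u then mono (n, u @ v) else (\<lambda>_. 0))"
proof (rule ext)
  fix x :: mon
  obtain n' w where x: "x = (n', w)" by (cases x)
  have "tmult (mono (m, v)) (mono (n, u)) (n', w) =
     (\<Sum>k\<le>length w. if k = length u then (if length u \<le> length w \<and> n' = n \<and> take k w = u \<and> m = n + k \<and> drop k w = v then 1 else 0) else 0)"
    unfolding tmult_apply
  proof (rule sum.cong[OF refl])
    fix k assume k: "k \<in> {..length w}"
    show "mono (n, u) (n', take k w) * mono (m, v) (n' + k, drop k w) =
       (if k = length u then (if length u \<le> length w \<and> n' = n \<and> take k w = u \<and> m = n + k \<and> drop k w = v then 1 else 0) else 0)"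
      using k by (auto simp: mono_def)
  qed
  also have "\<dots> = (if length u \<le> length w \<and> n' = n \<and> take (length u) w = u \<and> m = n + length u \<and> drop (length u) w = v then 1 else 0)"
    by (simp add: sum.delta)
  also have "\<dots> = (if m = n + length u then mono (n, u @ v) else (\<lambda>_. 0)) (n', w)"
  proof -
    have "(length u \<le> length w \<and> take (length u) w = u \<and> drop (length u) w = v) = (w = u @ v)"
      by (metis append_eq_conv_conj append_take_drop_id le_add1 length_append)
    then show ?thesis by (auto simp: mono_def)
  qed
  finally show "tmult (mono (m, v)) (mono (n, u)) x = (if m = n + length u then mono (n, u @ v) else (\<lambda>_. 0)) x"
    using x by (simp only:)
qed

lemma tmult_diff_left: "tmult (\<lambda>x. f x - g x) h = (\<lambda>x. tmult f h x - tmult g h x)"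
  by (simp add: tmult_def fun_eq_iff sum_subtractf algebra_simps split: prod.split)

lemma tmult_diff_right: "tmult f (\<lambda>x. g x - h x) = (\<lambda>x. tmult f g x - tmult f h x)"
  by (simp add: tmult_def fun_eq_iff sum_subtractf algebra_simps split: prod.split)

lemma TpdD: "f \<in> Tpd \<Longrightarrow> f (n, w) \<noteq> 0 \<Longrightarrow> vl n w"
  by (auto simp: Tpd_def valid_mon_vl[symmetric])

lemma Tpd_fin: "f \<in> Tpd \<Longrightarrow> finite {x. f x \<noteq> 0}"
  by (simp add: Tpd_def)

lemma TpdI: "finite {x. f x \<noteq> 0} \<Longrightarrow> (\<And>n w. f (n, w) \<noteq> 0 \<Longrightarrow> vl n w) \<Longrightarrow> f \<in> Tpd"
  by (auto simp: Tpd_def valid_mon_vl[symmetric])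

lemma Tpd_mono: "vl n w \<Longrightarrow> mono (n, w) \<in> Tpd"
  by (rule TpdI) (auto simp: mono_def split: if_splits)

lemma Tpd_zero: "(\<lambda>_. 0) \<in> Tpd"
  by (rule TpdI) auto

lemma Tpd_add: "f \<in> Tpd \<Longrightarrow> g \<in> Tpd \<Longrightarrow> (\<lambda>x. f x + g x) \<in> Tpd"
proof (rule TpdI)
  assume f: "f \<in> Tpd" and g: "g \<in> Tpd"
  show "finite {x. f x + g x \<noteq> 0}"
    by (rule finite_subset[of _ "{x. f x \<noteq> 0} \<union> {x. g x \<noteq> 0}"]) (use Tpd_fin[OF f] Tpd_fin[OF g] in auto)
  fix n w assume "f (n, w) + g (n, w) \<noteq> 0"
  then show "vl n w" using TpdD[OF f] TpdD[OF g] by force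
qed

lemma Tpd_smult: "f \<in> Tpd \<Longrightarrow> (\<lambda>x. c * f x) \<in> Tpd"
proof (rule TpdI)
  assume f: "f \<in> Tpd"
  show "finite {x. c * f x \<noteq> 0}"
    by (rule finite_subset[of _ "{x. f x \<noteq> 0}"]) (use Tpd_fin[OF f] in auto)
  fix n w assume "c * f (n, w) \<noteq> 0"
  then show "vl n w" using TpdD[OF f] by force
qed

lemma Tpd_tmult: "f \<in> Tpd \<Longrightarrow> g \<in> Tpd \<Longrightarrow> tmult f g \<in> Tpd"
proof (rule TpdI)
  assume f: "f \<in> Tpd" and g: "g \<in> Tpd"
  have key: "\<exists>k\<le>length w. g (n, take k w) \<noteq> 0 \<and> f (n + k, drop k w) \<noteq> 0" if "tmult f g (n, w) \<noteq> 0" for n w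
  proof -
    from that obtain k where "k \<in> {..length w}" "g (n, take k w) * f (n + k, drop k w) \<noteq> 0"
      unfolding tmult_apply by (rule sum.not_neutral_contains_not_neutral)
    then show ?thesis by auto
  qed
  show "finite {x. tmult f g x \<noteq> 0}"
  proof (rule finite_subset)
    show "{x. tmult f g x \<noteq> 0} \<subseteq> (\<lambda>(a, b). (fst a, snd a @ snd b)) ` ({x. g x \<noteq> 0} \<times> {x. f x \<noteq> 0})"
    proof
      fix x assume "x \<in> {x. tmult f g x \<noteq> 0}"
      moreover obtain n w where x: "x = (n, w)" by (cases x)
      ultimately obtain k where "k \<le> length w" "g (n, take k w) \<noteq> 0" "f (n + k, drop k w) \<noteq> 0"
        using key by auto
      then show "x \<in> (\<lambda>(a, b). (fst a, snd a @ snd b)) ` ({x. g x \<noteq> 0} \<times> {x. f x \<noteq> 0})"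
        using x by (auto intro!: image_eqI[of _ _ "((n, take k w), (n + k, drop k w))"])
    qed
    show "finite ((\<lambda>(a, b). (fst a, snd a @ snd b)) ` ({x. g x \<noteq> 0} \<times> {x. f x \<noteq> 0}))"
      using Tpd_fin[OF f] Tpd_fin[OF g] by auto
  qed
  fix n w assume "tmult f g (n, w) \<noteq> 0"
  then obtain k where k: "k \<le> length w" "g (n, take k w) \<noteq> 0" "f (n + k, drop k w) \<noteq> 0"
    using key by auto
  have "vl n (take k w @ drop k w)"
    unfolding vl_append using TpdD[OF f k(3)] TpdD[OF g k(2)] k(1) by simp
  then show "vl n w" by simp
qed

lemma ig_add: "f \<in> ideal_gen G \<Longrightarrow> g \<in> ideal_gen G \<Longrightarrow> (\<lambda>x. f x + g x) \<in> ideal_gen G"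
  unfolding ideal_gen_def by blast

lemma ig_smult: "f \<in> ideal_gen G \<Longrightarrow> (\<lambda>x. c * f x) \<in> ideal_gen G"
  unfolding ideal_gen_def by blast

lemma ig_zero: "(\<lambda>_. 0) \<in> ideal_gen G"
  unfolding ideal_gen_def by blast

lemma ig_gen: "r \<in> G \<Longrightarrow> r \<in> ideal_gen G"
  unfolding ideal_gen_def by blast

lemma ig_tmult1: "f \<in> ideal_gen G \<Longrightarrow> g \<in> Tpd \<Longrightarrow> tmult f g \<in> ideal_gen G"
  unfolding ideal_gen_def by blast

lemma ig_tmult2: "f \<in> ideal_gen G \<Longrightarrow> g \<in> Tpd \<Longrightarrow> tmult g f \<in> ideal_gen G"
  unfolding ideal_gen_def by blast

lemma ig_sum: "finite S \<Longrightarrow> (\<forall>z\<in>S. F z \<in> ideal_gen G) \<Longrightarrow> (\<lambda>y. \<Sum>z\<in>S. F z y) \<in> ideal_gen G"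
proof (induction S rule: finite_induct)
  case empty then show ?case using ig_zero by simp
next
  case (insert a S)
  then have "(\<lambda>y. F a y + (\<Sum>z\<in>S. F z y)) \<in> ideal_gen G"
    by (intro ig_add) auto
  then show ?case using insert by simp
qed

lemma combine:
  "(\<lambda>z. A z - B z) \<in> ideal_gen G \<Longrightarrow> (\<lambda>z. B z - C z) \<in> ideal_gen G \<Longrightarrow> (\<lambda>z. (A z :: 'a::field) - C z) \<in> ideal_gen G"
  using ig_add[of "\<lambda>z. A z - B z" G "\<lambda>z. B z - C z"] by simp

lemma mag_rel_in: "b < a \<Longrightarrow> a \<le> n \<Longrightarrow> mag_rel n b a \<in> (I_Mag :: (mon \<Rightarrow> 'a::field) set)"
  unfolding I_Mag_def by (rule ig_gen) blast

lemma ins_I: "vl n (a # s) \<Longrightarrow> (\<lambda>z. mono (n, a # s) z - mono (n, ins a s) z) \<in> (I_Mag :: (mon \<Rightarrow> 'a::field) set)"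
proof (induction s arbitrary: a n)
  case Nil then show ?case using ig_zero by (simp add: I_Mag_def)
next
  case (Cons b t)
  show ?case
  proof (cases "a \<le> b")
    case True then show ?thesis using ig_zero by (simp add: I_Mag_def)
  next
    case False
    have r: "(\<lambda>z. mono (n, a#b#t) z - mono (n, b#Suc a#t) z) \<in> (I_Mag :: (mon \<Rightarrow> 'a::field) set)"
    proof -
      have "tmult (mono (Suc (Suc n), t)) (mag_rel n b a) \<in> (I_Mag :: (mon \<Rightarrow> 'a::field) set)"
        unfolding I_Mag_def
        by (rule ig_tmult2) (use mag_rel_in[of b a n] False Cons.prems in \<open>auto simp: I_Mag_def intro!: Tpd_mono\<close>)
      moreover have "tmult (mono (Suc (Suc n), t)) (mag_rel n b a) = (\<lambda>z. mono (n, a#b#t) z - mono (n, b#Suc a#t) z :: 'a)"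
        unfolding mag_rel_def tmult_diff_right tmult_mono_mono by simp
      ultimately show ?thesis by simp
    qed
    have s: "(\<lambda>z. mono (n, b#Suc a#t) z - mono (n, b # ins (Suc a) t) z) \<in> (I_Mag :: (mon \<Rightarrow> 'a::field) set)"
    proof -
      have ih: "(\<lambda>z. mono (Suc n, Suc a # t) z - mono (Suc n, ins (Suc a) t) z) \<in> (I_Mag :: (mon \<Rightarrow> 'a::field) set)"
        using Cons.IH Cons.prems by simp
      have "tmult (\<lambda>z. mono (Suc n, Suc a # t) z - mono (Suc n, ins (Suc a) t) z) (mono (n, [b])) \<in> (I_Mag :: (mon \<Rightarrow> 'a::field) set)"
        unfolding I_Mag_def
        by (rule ig_tmult1) (use ih False Cons.prems in \<open>auto simp: I_Mag_def intro!: Tpd_mono\<close>)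
      moreover have "tmult (\<lambda>z. mono (Suc n, Suc a # t) z - mono (Suc n, ins (Suc a) t) z) (mono (n, [b])) = (\<lambda>z. mono (n, b#Suc a#t) z - mono (n, b # ins (Suc a) t) z :: 'a)"
        unfolding tmult_diff_left tmult_mono_mono by simp
      ultimately show ?thesis by simp
    qed
    show ?thesis using combine[OF r[unfolded I_Mag_def] s[unfolded I_Mag_def]] False by (simp add: I_Mag_def)
  qed
qed

lemma nf_I: "vl n w \<Longrightarrow> (\<lambda>z. mono (n, w) z - mono (n, nf w) z) \<in> (I_Mag :: (mon \<Rightarrow> 'a::field) set)"
proof (induction w arbitrary: n)
  case Nil then show ?case using ig_zero by (simp add: I_Mag_def)
next
  case (Cons a w)
  have ih: "(\<lambda>z. mono (Suc n, w) z - mono (Suc n, nf w) z) \<in> (I_Mag :: (mon \<Rightarrow> 'a::field) set)"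
    using Cons by simp
  have "tmult (\<lambda>z. mono (Suc n, w) z - mono (Suc n, nf w) z) (mono (n, [a])) \<in> (I_Mag :: (mon \<Rightarrow> 'a::field) set)"
    unfolding I_Mag_def
    by (rule ig_tmult1) (use ih Cons.prems in \<open>auto simp: I_Mag_def intro!: Tpd_mono\<close>)
  moreover have "tmult (\<lambda>z. mono (Suc n, w) z - mono (Suc n, nf w) z) (mono (n, [a])) = (\<lambda>z. mono (n, a # w) z - mono (n, a # nf w) z :: 'a)"
    unfolding tmult_diff_left tmult_mono_mono by simp
  ultimately have r: "(\<lambda>z. mono (n, a # w) z - mono (n, a # nf w) z) \<in> (I_Mag :: (mon \<Rightarrow> 'a::field) set)" by simp
  have s: "(\<lambda>z. mono (n, a # nf w) z - mono (n, ins a (nf w)) z) \<in> (I_Mag :: (mon \<Rightarrow> 'a::field) set)"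
    by (rule ins_I) (use Cons.prems vl_nf in auto)
  show ?case using combine[OF r[unfolded I_Mag_def] s[unfolded I_Mag_def]] by (simp add: I_Mag_def)
qed


definition phi :: "(mon \<Rightarrow> 'k::field) \<Rightarrow> mon \<Rightarrow> 'k" where
  "phi f y = (\<Sum>w\<in>V (fst y) (length (snd y)). if nf w = snd y then f (fst y, w) else 0)"

lemma phi_apply: "phi f (n, s) = (\<Sum>w\<in>V n (length s). if nf w = s then f (n, w) else 0)"
  unfolding phi_def by (simp only: fst_conv snd_conv)

lemma phi_add: "phi (\<lambda>x. f x + g x) y = phi f y + phi g y"
  unfolding phi_def sum.distrib[symmetric] by (rule sum.cong) auto

lemma phi_diff: "phi (\<lambda>x. f x - g x) y = phi f y - phi g y"
  unfolding phi_def sum_subtractf[symmetric] by (rule sum.cong) auto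

lemma phi_smult: "phi (\<lambda>x. c * f x) y = c * phi f y"
  unfolding phi_def sum_distrib_left by (rule sum.cong) auto

lemma phi_zero: "phi (\<lambda>_. 0) y = 0"
  unfolding phi_def by simp

lemma phi_mono: "phi (mono (n, w)) (m, s) = (if m = n \<and> vl n w \<and> nf w = s then 1 else 0)"
proof -
  have "phi (mono (n, w)) (m, s) = (\<Sum>w'\<in>V m (length s). if w' = w then (if m = n \<and> nf w = s then 1 else 0) else 0)"
    unfolding phi_apply by (rule sum.cong) (auto simp: mono_def)
  also have "\<dots> = (if m = n \<and> vl n w \<and> nf w = s then 1 else 0)"
    by (simp add: sum.delta[OF finite_V]) (auto simp: V_def)
  finally show ?thesis .
qed

lemma phi_zero_sum:
  assumes "\<forall>t. length t = L \<longrightarrow> phi f (m, t) = 0"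
  shows "(\<Sum>w\<in>V m L. f (m, w) * h (nf w)) = 0"
proof -
  have "(\<Sum>w\<in>V m L. f (m, w) * h (nf w)) = (\<Sum>t\<in>nf ` V m L. \<Sum>w\<in>{w. w \<in> V m L \<and> nf w = t}. f (m, w) * h (nf w))"
    by (rule sum.image_gen[OF finite_V])
  also have "\<dots> = (\<Sum>t\<in>nf ` V m L. h t * phi f (m, t))"
  proof (rule sum.cong[OF refl])
    fix t assume "t \<in> nf ` V m L"
    then have lt: "length t = L" by (auto simp: V_def)
    have "(\<Sum>w\<in>{w. w \<in> V m L \<and> nf w = t}. f (m, w) * h (nf w)) = (\<Sum>w\<in>{w \<in> V m L. nf w = t}. h t * f (m, w))"
      by (rule sum.cong) auto
    also have "\<dots> = h t * (\<Sum>w\<in>{w \<in> V m L. nf w = t}. f (m, w))" by (simp add: sum_distrib_left)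
    also have "(\<Sum>w\<in>{w \<in> V m L. nf w = t}. f (m, w)) = phi f (m, t)"
      unfolding phi_apply lt by (simp add: sum.inter_filter[OF finite_V])
    finally show "(\<Sum>w\<in>{w. w \<in> V m L \<and> nf w = t}. f (m, w) * h (nf w)) = h t * phi f (m, t)" .
  qed
  also have "\<dots> = 0" using assms by (auto intro!: sum.neutral simp: V_def)
  finally show ?thesis .
qed

lemma V_split: "k \<le> L \<Longrightarrow> bij_betw (\<lambda>(u, v). u @ v) (V n k \<times> V (n + k) (L - k)) (V n L)"
proof (rule bij_betwI')
  fix x y assume "x \<in> V n k \<times> V (n + k) (L - k)" "y \<in> V n k \<times> V (n + k) (L - k)"
  moreover obtain u v u' v' where xy: "x = (u, v)" "y = (u', v')" by (cases x, cases y)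
  ultimately have "length u = length u'" by (simp add: V_def)
  then show "((case x of (u, v) \<Rightarrow> u @ v) = (case y of (u, v) \<Rightarrow> u @ v)) = (x = y)"
    unfolding xy by (simp add: append_eq_append_conv)
next
  fix x assume "k \<le> L" "x \<in> V n k \<times> V (n + k) (L - k)"
  moreover obtain u v where xy: "x = (u, v)" by (cases x)
  ultimately show "(case x of (u, v) \<Rightarrow> u @ v) \<in> V n L"
    by (simp add: V_def vl_append)
next
  fix w assume k: "k \<le> L" and w: "w \<in> V n L"
  then have "(take k w, drop k w) \<in> V n k \<times> V (n + k) (L - k)"
    using vl_append[of n "take k w" "drop k w"] by (simp add: V_def min_def split: if_splits)
  then show "\<exists>x\<in>V n k \<times> V (n + k) (L - k). w = (case x of (u, v) \<Rightarrow> u @ v)"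
    by (rule bexI[rotated]) simp
qed

lemma phi_tmult:
  "phi (tmult f g) (n, s) = (\<Sum>k\<le>length s. \<Sum>u\<in>V n k. \<Sum>v\<in>V (n + k) (length s - k).
      if nf (u @ v) = s then g (n, u) * f (n + k, v) else 0)"
proof -
  define L where "L = length s"
  have "phi (tmult f g) (n, s) = (\<Sum>w\<in>V n L. \<Sum>k\<le>L. if nf w = s then g (n, take k w) * f (n + k, drop k w) else 0)"
    unfolding phi_apply L_def[symmetric]
  proof (rule sum.cong[OF refl])
    fix w assume "w \<in> V n L"
    then have "length w = L" by (simp add: V_def)
    then show "(if nf w = s then tmult f g (n, w) else 0) = (\<Sum>k\<le>L. if nf w = s then g (n, take k w) * f (n + k, drop k w) else 0)"
      by (simp add: tmult_apply)
  qed
  also have "\<dots> = (\<Sum>k\<le>L. \<Sum>w\<in>V n L. if nf w = s then g (n, take k w) * f (n + k, drop k w) else 0)"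
    by (rule sum.swap)
  also have "\<dots> = (\<Sum>k\<le>L. \<Sum>u\<in>V n k. \<Sum>v\<in>V (n + k) (L - k). if nf (u @ v) = s then g (n, u) * f (n + k, v) else 0)"
  proof (rule sum.cong[OF refl])
    fix k assume "k \<in> {..L}"
    then have k: "k \<le> L" by simp
    have "(\<Sum>w\<in>V n L. if nf w = s then g (n, take k w) * f (n + k, drop k w) else 0)
        = (\<Sum>p\<in>V n k \<times> V (n + k) (L - k). (\<lambda>w. if nf w = s then g (n, take k w) * f (n + k, drop k w) else 0) ((\<lambda>(u, v). u @ v) p))"
      by (rule sum.reindex_bij_betw[symmetric, OF V_split[OF k]])
    also have "\<dots> = (\<Sum>p\<in>V n k \<times> V (n + k) (L - k). case p of (u, v) \<Rightarrow> if nf (u @ v) = s then g (n, u) * f (n + k, v) else 0)"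
      by (rule sum.cong) (auto simp: V_def)
    also have "\<dots> = (\<Sum>u\<in>V n k. \<Sum>v\<in>V (n + k) (L - k). if nf (u @ v) = s then g (n, u) * f (n + k, v) else 0)"
      by (rule sum.cartesian_product[symmetric])
    finally show "(\<Sum>w\<in>V n L. if nf w = s then g (n, take k w) * f (n + k, drop k w) else 0) = \<dots>" .
  qed
  finally show ?thesis unfolding L_def .
qed

lemma K_tmult1:
  assumes "\<forall>y. phi f y = 0"
  shows "phi (tmult f g) y = 0"
proof -
  obtain n s where y: "y = (n, s)" by (cases y)
  have "(\<Sum>v\<in>V (n + k) (length s - k). if nf (u @ v) = s then g (n, u) * f (n + k, v) else 0) = 0" for k u
  proof -
    have "(\<Sum>v\<in>V (n + k) (length s - k). if nf (u @ v) = s then g (n, u) * f (n + k, v) else 0)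
       = (\<Sum>v\<in>V (n + k) (length s - k). f (n + k, v) * (\<lambda>t. if nf (u @ t) = s then g (n, u) else 0) (nf v))"
      by (rule sum.cong[OF refl]) (use nf_app_right[of u] in simp)
    also have "\<dots> = 0" by (rule phi_zero_sum) (use assms in auto)
    finally show ?thesis .
  qed
  then show ?thesis unfolding y phi_tmult by simp
qed

lemma K_tmult2:
  assumes "\<forall>y. phi f y = 0"
  shows "phi (tmult g f) y = 0"
proof -
  obtain n s where y: "y = (n, s)" by (cases y)
  have "(\<Sum>u\<in>V n k. \<Sum>v\<in>V (n + k) (length s - k). if nf (u @ v) = s then f (n, u) * g (n + k, v) else 0) = 0" for k
  proof -
    have "(\<Sum>u\<in>V n k. \<Sum>v\<in>V (n + k) (length s - k). if nf (u @ v) = s then f (n, u) * g (n + k, v) else 0)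
       = (\<Sum>v\<in>V (n + k) (length s - k). \<Sum>u\<in>V n k. if nf (u @ v) = s then f (n, u) * g (n + k, v) else 0)"
      by (rule sum.swap)
    also have "\<dots> = (\<Sum>v\<in>V (n + k) (length s - k). 0)"
    proof (rule sum.cong[OF refl])
      fix v
      have "(\<Sum>u\<in>V n k. if nf (u @ v) = s then f (n, u) * g (n + k, v) else 0)
         = (\<Sum>u\<in>V n k. f (n, u) * (\<lambda>t. if nf (t @ v) = s then g (n + k, v) else 0) (nf u))"
        by (rule sum.cong[OF refl]) (use nf_app_left[of _ v] in simp)
      also have "\<dots> = 0" by (rule phi_zero_sum) (use assms in auto)
      finally show "(\<Sum>u\<in>V n k. if nf (u @ v) = s then f (n, u) * g (n + k, v) else 0) = 0" .
    qed
    finally show ?thesis by simp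
  qed
  then show ?thesis unfolding y phi_tmult by simp
qed

lemma Tpd_mag_rel: "i < j \<Longrightarrow> j \<le> n \<Longrightarrow> mag_rel n i j \<in> Tpd"
proof (rule TpdI)
  show "finite {x. mag_rel n i j x \<noteq> 0}"
    by (rule finite_subset[of _ "{(n,[j,i]),(n,[i,Suc j])}"]) (auto simp: mag_rel_def mono_def)
  fix m w assume "i < j" "j \<le> n" "mag_rel n i j (m, w) \<noteq> 0"
  then show "vl m w" by (auto simp: mag_rel_def mono_def split: if_splits)
qed

lemma I_Mag_K: "g \<in> (I_Mag :: (mon \<Rightarrow> 'a::field) set) \<Longrightarrow> g \<in> Tpd \<and> (\<forall>y. phi g y = 0)"
proof -
  let ?K = "{f :: mon \<Rightarrow> 'a. f \<in> Tpd \<and> (\<forall>y. phi f y = 0)}"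
  have gen: "mag_rel n i j \<in> ?K" if "i < j" "j \<le> n" for n i j
  proof -
    have "phi (mag_rel n i j) y = (0::'a)" for y
    proof -
      obtain m s where y: "y = (m, s)" by (cases y)
      show ?thesis unfolding y mag_rel_def phi_diff phi_mono using that by simp
    qed
    then show ?thesis using Tpd_mag_rel[OF that] by simp
  qed
  have h1: "?K \<subseteq> Tpd" by blast
  have h2: "{mag_rel n i j | n i j. i < j \<and> j \<le> n} \<subseteq> ?K" using gen by blast
  have h3: "(\<lambda>_. 0) \<in> ?K" by (simp add: Tpd_zero phi_zero)
  have h4: "\<forall>f\<in>?K. \<forall>g\<in>?K. (\<lambda>x. f x + g x) \<in> ?K" by (simp add: Tpd_add phi_add)
  have h5: "\<forall>c. \<forall>f\<in>?K. (\<lambda>x. c * f x) \<in> ?K" by (simp add: Tpd_smult phi_smult)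
  have h6: "\<forall>f\<in>?K. \<forall>g\<in>Tpd. tmult f g \<in> ?K \<and> tmult g f \<in> ?K"
    by (simp add: Tpd_tmult K_tmult1 K_tmult2)
  have "?K \<in> {J. J \<subseteq> Tpd \<and> {mag_rel n i j | n i j. i < j \<and> j \<le> n} \<subseteq> J \<and> (\<lambda>_. 0) \<in> J
      \<and> (\<forall>f\<in>J. \<forall>g\<in>J. (\<lambda>x. f x + g x) \<in> J)
      \<and> (\<forall>c. \<forall>f\<in>J. (\<lambda>x. c * f x) \<in> J)
      \<and> (\<forall>f\<in>J. \<forall>g\<in>Tpd. tmult f g \<in> J \<and> tmult g f \<in> J)}"
    by (intro CollectI conjI h1 h2 h3 h4 h5 h6)
  then have "I_Mag \<subseteq> ?K" unfolding I_Mag_def ideal_gen_def by (rule Inter_lower)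
  then show "g \<in> I_Mag \<Longrightarrow> g \<in> Tpd \<and> (\<forall>y. phi g y = 0)" by blast
qed


lemma phi_nz: "phi f (n, s) \<noteq> 0 \<Longrightarrow> \<exists>w. vl n w \<and> nf w = s \<and> f (n, w) \<noteq> 0"
proof -
  assume "phi f (n, s) \<noteq> 0"
  then obtain w where "w \<in> V n (length s)" "(if nf w = s then f (n, w) else 0) \<noteq> 0"
    unfolding phi_apply by (rule sum.not_neutral_contains_not_neutral)
  then show ?thesis by (auto simp: V_def split: if_splits)
qed

lemma phi_Tpd: "f \<in> Tpd \<Longrightarrow> phi f \<in> Tpd"
proof (rule TpdI)
  assume f: "f \<in> Tpd"
  show "finite {x. phi f x \<noteq> 0}"
  proof (rule finite_subset)
    show "{x. phi f x \<noteq> 0} \<subseteq> (\<lambda>(n, w). (n, nf w)) ` {x. f x \<noteq> 0}"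
    proof
      fix x assume "x \<in> {x. phi f x \<noteq> 0}"
      moreover obtain n s where x: "x = (n, s)" by (cases x)
      ultimately obtain w where "nf w = s" "f (n, w) \<noteq> 0" using phi_nz by blast
      then show "x \<in> (\<lambda>(n, w). (n, nf w)) ` {x. f x \<noteq> 0}"
        using x by (auto intro!: image_eqI[of _ _ "(n, w)"])
    qed
    show "finite ((\<lambda>(n, w). (n, nf w)) ` {x. f x \<noteq> 0})" using Tpd_fin[OF f] by simp
  qed
  fix n s assume "phi f (n, s) \<noteq> 0"
  then obtain w where "vl n w" "nf w = s" using phi_nz by blast
  then show "vl n s" using vl_nf by blast
qed

lemma phi_Bmon: "phi f x \<noteq> 0 \<Longrightarrow> x \<in> Bmon"
proof -
  assume a: "phi f x \<noteq> 0"
  obtain n s where x: "x = (n, s)" by (cases x)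
  then obtain w where "vl n w" "nf w = s" using phi_nz a by blast
  then show ?thesis using x vl_nf sorted_nf by (auto simp: Bmon_def valid_mon_vl)
qed

lemma phi_as_sum:
  assumes f: "f \<in> Tpd"
  shows "phi f y = (\<Sum>z\<in>{x. f x \<noteq> 0}. f z * mono (fst z, nf (snd z)) y)"
proof -
  obtain n s where y: "y = (n, s)" by (cases y)
  define T where "T = {x. f x \<noteq> 0}"
  have fT: "finite T" using Tpd_fin[OF f] by (simp add: T_def)
  define h where "h z = (if fst z = n \<and> nf (snd z) = s then f z else 0)" for z
  define A where "A = Pair n ` V n (length s)"
  have fA: "finite A" by (simp add: A_def finite_V)
  have "phi f y = (\<Sum>w\<in>V n (length s). h (Pair n w))"
    unfolding y phi_apply h_def by simp
  also have "\<dots> = sum h A" unfolding A_def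
    by (rule sum.reindex[symmetric, unfolded comp_def]) (simp add: inj_on_def)
  also have "\<dots> = sum h (A \<inter> T)"
    by (rule sum.mono_neutral_right[OF fA]) (auto simp: h_def T_def)
  also have "\<dots> = sum h T"
  proof (rule sum.mono_neutral_left[OF fT])
    show "A \<inter> T \<subseteq> T" by blast
    show "\<forall>i\<in>T - A \<inter> T. h i = 0"
    proof
      fix z assume z: "z \<in> T - A \<inter> T"
      obtain m w where zz: "z = (m, w)" by (cases z)
      show "h z = 0"
      proof (rule ccontr)
        assume "h z \<noteq> 0"
        then have "m = n" "nf w = s" "f (m, w) \<noteq> 0" by (auto simp: h_def zz split: if_splits)
        then have "z \<in> A" using TpdD[OF f] by (auto simp: A_def V_def zz)
        then show False using z by blast
      qed
    qed
  qed
  also have "\<dots> = (\<Sum>z\<in>T. f z * mono (fst z, nf (snd z)) y)"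
    by (rule sum.cong[OF refl]) (auto simp: h_def mono_def y)
  finally show ?thesis by (simp add: T_def)
qed

theorem proposition1p2:
  shows "(\<forall>f\<in>(Tpd :: (mon \<Rightarrow> 'k::field) set).
            \<exists>g\<in>Tpd. (\<forall>x. g x \<noteq> 0 \<longrightarrow> x \<in> Bmon) \<and> (\<lambda>x. f x - g x) \<in> I_Mag)
       \<and> (\<forall>g\<in>(Tpd :: (mon \<Rightarrow> 'k::field) set).
            (\<forall>x. g x \<noteq> 0 \<longrightarrow> x \<in> Bmon) \<and> g \<in> I_Mag \<longrightarrow> g = (\<lambda>_. 0))"
proof (intro conjI ballI impI)
  fix f :: "mon \<Rightarrow> 'k" assume f: "f \<in> Tpd"
  define T where "T = {x. f x \<noteq> 0}"
  have fT: "finite T" using Tpd_fin[OF f] by (simp add: T_def)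
  have mem: "(\<lambda>y. \<Sum>z\<in>T. f z * (mono z y - mono (fst z, nf (snd z)) y)) \<in> (I_Mag :: (mon \<Rightarrow> 'k) set)"
    unfolding I_Mag_def
  proof (rule ig_sum[OF fT], rule ballI)
    fix z assume "z \<in> T"
    then have "vl (fst z) (snd z)" using TpdD[OF f, of "fst z" "snd z"] by (simp add: T_def)
    then have "(\<lambda>y. mono (fst z, snd z) y - mono (fst z, nf (snd z)) y) \<in> (I_Mag :: (mon \<Rightarrow> 'k) set)"
      by (rule nf_I)
    then show "(\<lambda>y. f z * (mono z y - mono (fst z, nf (snd z)) y)) \<in> ideal_gen {mag_rel n i j |n i j. i < j \<and> j \<le> n}"
      unfolding I_Mag_def using ig_smult[of _ _ "f z"] by (simp add: prod.collapse)
  qed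
  have eq: "(\<lambda>y. \<Sum>z\<in>T. f z * (mono z y - mono (fst z, nf (snd z)) y)) = (\<lambda>x. f x - phi f x)"
  proof (rule ext)
    fix y
    have "(\<Sum>z\<in>T. f z * (mono z y - mono (fst z, nf (snd z)) y))
        = (\<Sum>z\<in>T. f z * mono z y) - (\<Sum>z\<in>T. f z * mono (fst z, nf (snd z)) y)"
      by (simp add: right_diff_distrib sum_subtractf)
    also have "(\<Sum>z\<in>T. f z * mono z y) = f y"
    proof -
      have "(\<Sum>z\<in>T. f z * mono z y) = (\<Sum>z\<in>T. if y = z then f y else 0)"
        by (rule sum.cong) (auto simp: mono_def)
      also have "\<dots> = f y" using fT by (simp add: sum.delta T_def)
      finally show ?thesis .
    qed
    also have "(\<Sum>z\<in>T. f z * mono (fst z, nf (snd z)) y) = phi f y"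
      using phi_as_sum[OF f] by (simp add: T_def)
    finally show "(\<Sum>z\<in>T. f z * (mono z y - mono (fst z, nf (snd z)) y)) = f y - phi f y" .
  qed
  show "\<exists>g\<in>Tpd. (\<forall>x. g x \<noteq> 0 \<longrightarrow> x \<in> Bmon) \<and> (\<lambda>x. f x - g x) \<in> I_Mag"
    using mem eq phi_Tpd[OF f] phi_Bmon by metis
next
  fix g :: "mon \<Rightarrow> 'k" assume g: "g \<in> Tpd" and h: "(\<forall>x. g x \<noteq> 0 \<longrightarrow> x \<in> Bmon) \<and> g \<in> I_Mag"
  then have B: "\<And>x. g x \<noteq> 0 \<Longrightarrow> x \<in> Bmon" and ph: "\<forall>y. phi g y = 0" using I_Mag_K by blast+
  show "g = (\<lambda>_. 0)"
  proof (rule ext, rule ccontr)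
    fix x assume nz: "g x \<noteq> 0"
    obtain n s where x: "x = (n, s)" by (cases x)
    have sB: "vl n s" "sorted s" using B[OF nz] x by (auto simp: Bmon_def valid_mon_vl)
    have "phi g (n, s) = (\<Sum>w\<in>V n (length s). if w = s then g (n, s) else 0)"
      unfolding phi_apply
    proof (rule sum.cong[OF refl])
      fix w
      show "(if nf w = s then g (n, w) else 0) = (if w = s then g (n, s) else 0)"
      proof (cases "g (n, w) = 0")
        case False
        then have "sorted w" using B[of "(n, w)"] by (auto simp: Bmon_def)
        then show ?thesis by (simp add: nf_sorted)
      next
        case True then show ?thesis by (auto simp: nf_sorted sB)
      qed
    qed
    also have "\<dots> = g (n, s)" using sB by (simp add: sum.delta[OF finite_V]) (simp add: V_def)
    finally have "g (n, s) = 0" using ph by simp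
    then show False using nz x by simp
  qed
qed

end
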